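(* Let $P=\sum_{i=0}^Nq^iP_i(D)\in\mathbb{C}[q][D]$ with $D=q\frac{d}{dq}$, and let $P_i^{(r)}$ denote the $r$-th formal derivative of the polynomial $P_i$. Let $I=\sum_{0\leq i\leq N,\ j\geq0}a_{ij}h^iq^j$ with $a_{ij}\in\mathbb{C}$, and set $a_{ij}=0$ for $j<0$. Then $I$ is a perturbed solution of $P$ if and only if for every $0\leq s\leq N$ and every $m\in\mathbb{Z}$ $$\sum_{k=0}^s\frac{1}{(s-k)!}\Big(a_{k,m}P^{(s-k)}_N(m)+a_{k,m+1}P^{(s-k)}_{N-1}(m+1)+\cdots+a_{k,m+N}P^{(s-k)}_0(m+N)\Big)=0.$$
   Context: Write $I=\sum_{i=0}^NI^ih^i$ with $I^i=\sum_ja_{ij}q^j$, and put $I_r=\sum_{m=0}^rI^{r-m}\,t^m/m!\in\mathbb{C}[[q]][t]$. Operators act on $\mathbb{C}[[q]][t]$ via $D(f(q)t^m)=qf'(q)t^m+mf(q)t^{m-1}$, with $q$ acting by multiplication. $I$ is a perturbed solution of $P$ if $PI_r=0$ for all $0\leq r\leq N$. *)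

theory Defs
  imports "HOL-Computational_Algebra.Computational_Algebra"
begin

text \<open>Elements of C[[q]][t] are modelled as polynomials in t with formal power series
  (in q) as coefficients: type complex fps poly.\<close>

definition opD :: "complex fps poly \<Rightarrow> complex fps poly" where
  "opD g = map_poly (\<lambda>f. fps_X * fps_deriv f) g + pderiv g"

definition poly_opD :: "complex poly \<Rightarrow> complex fps poly \<Rightarrow> complex fps poly" where
  "poly_opD Q g = (\<Sum>k\<le>degree Q. smult (fps_const (coeff Q k)) ((opD ^^ k) g))"

definition apply_P :: "nat \<Rightarrow> (nat \<Rightarrow> complex poly) \<Rightarrow> complex fps poly \<Rightarrow> complex fps poly" where
  "apply_P N Ps g = (\<Sum>i\<le>N. smult (fps_X ^ i) (poly_opD (Ps i) g))"

definition Icomp :: "(nat \<Rightarrow> nat \<Rightarrow> complex) \<Rightarrow> nat \<Rightarrow> complex fps" where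
  "Icomp a i = Abs_fps (a i)"

definition I_r :: "(nat \<Rightarrow> nat \<Rightarrow> complex) \<Rightarrow> nat \<Rightarrow> complex fps poly" where
  "I_r a r = (\<Sum>m\<le>r. monom (fps_const (1 / fact m) * Icomp a (r - m)) m)"

text \<open>I = sum_{i\<le>N} I^i h^i is a perturbed solution of P.\<close>
definition perturbed_solution :: "nat \<Rightarrow> (nat \<Rightarrow> complex poly) \<Rightarrow> (nat \<Rightarrow> nat \<Rightarrow> complex) \<Rightarrow> bool" where
  "perturbed_solution N Ps a \<longleftrightarrow> (\<forall>r\<le>N. apply_P N Ps (I_r a r) = 0)"

definition aext :: "(nat \<Rightarrow> nat \<Rightarrow> complex) \<Rightarrow> nat \<Rightarrow> int \<Rightarrow> complex" where
  "aext a k j = (if j < 0 then 0 else a k (nat j))"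

end

theory Submission
  imports Defs
begin


lemma sum_rev_atMost: "(\<Sum>i\<le>n. f i) = (\<Sum>i\<le>n. f (n - i))" for n :: nat
  by (rule sum.reindex_bij_witness[where i="\<lambda>i. n - i" and j="\<lambda>i. n - i"]) auto

definition dd :: "complex fps poly \<Rightarrow> nat \<Rightarrow> nat \<Rightarrow> complex" where
  "dd g t n = fact t * (coeff g t $ n)"

lemma X_deriv_nth: "(fps_X * fps_deriv f) $ n = of_nat n * f $ n" for f :: "complex fps"
  by (cases n) (simp_all add: fps_X_mult_nth)

lemma dd_opD: "dd (opD g) t n = of_nat n * dd g t n + dd g (Suc t) n"
proof -
  have "coeff (map_poly (\<lambda>f. fps_X * fps_deriv f) g) t = fps_X * fps_deriv (coeff g t)"
    by (simp add: coeff_map_poly)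
  then show ?thesis
    by (simp add: dd_def opD_def coeff_pderiv X_deriv_nth algebra_simps)
qed

definition EE :: "nat \<Rightarrow> complex poly \<Rightarrow> (nat \<Rightarrow> complex) \<Rightarrow> nat \<Rightarrow> complex" where
  "EE M R h t = (\<Sum>\<rho>\<le>M. coeff R \<rho> * h (t + \<rho>))"

lemma EE_pCons0:
  assumes "\<forall>s>M. h s = 0"
  shows "EE M (pCons 0 R) h t = EE M R h (Suc t)"
proof -
  have "EE M (pCons 0 R) h t = (\<Sum>\<rho>\<le>M. coeff (pCons 0 R) \<rho> * h (t + \<rho>))" by (simp add: EE_def)
  also have "\<dots> = (\<Sum>\<rho><M. coeff R \<rho> * h (Suc t + \<rho>))"
  proof (cases M)
    case 0 then show ?thesis by simp
  next
    case (Suc M') then show ?thesis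
      by (simp only: sum.atMost_Suc_shift lessThan_Suc_atMost) simp
  qed
  also have "\<dots> = EE M R h (Suc t)"
    using assms by (simp add: EE_def lessThan_Suc_atMost[symmetric] )
  finally show ?thesis .
qed

lemma EE_add: "EE M (R + S) h t = EE M R h t + EE M S h t"
  by (simp add: EE_def sum.distrib algebra_simps)
lemma EE_smult: "EE M (smult c R) h t = c * EE M R h t"
  by (simp add: EE_def sum_distrib_left algebra_simps)
lemma EE_sum: "finite A \<Longrightarrow> EE M (\<Sum>k\<in>A. R k) h t = (\<Sum>k\<in>A. EE M (R k) h t)"
  by (induct A rule: finite_induct) (simp_all add: EE_add, simp add: EE_def)

lemma dd_opD_pow:
  assumes "\<forall>s>M. dd g s n = 0"
  shows "dd ((opD ^^ k) g) t n = EE M ([:of_nat n, 1:] ^ k) (\<lambda>s. dd g s n) t"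
proof (induct k arbitrary: t)
  case 0
  then show ?case by (simp add: EE_def)
next
  case (Suc k)
  have "[:of_nat n, 1:] ^ Suc k = smult (of_nat n) ([:of_nat n, 1:] ^ k) + pCons 0 ([:of_nat n, 1:] ^ k)"
    by simp
  then show ?case using Suc assms
    by (simp add: dd_opD EE_add EE_smult EE_pCons0)
qed

lemma pcompose_X_pow: "pcompose ([:0,1:] ^ k) p = p ^ k"
  by (induct k) (simp_all add: pcompose_mult pcompose_1 pcompose_pCons)

lemma pcompose_monom': "pcompose (monom c k) p = smult c (p ^ k)"
  by (simp add: monom_altdef pcompose_smult pcompose_X_pow)

lemma pcompose_as_sum: "pcompose Q p = (\<Sum>k\<le>degree Q. smult (coeff Q k) (p ^ k))"
proof -
  have "pcompose Q p = pcompose (\<Sum>i\<le>degree Q. monom (coeff Q i) i) p"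
    by (simp add: poly_as_sum_of_monoms)
  also have "\<dots> = (\<Sum>k\<le>degree Q. smult (coeff Q k) (p ^ k))"
    by (simp add: pcompose_sum pcompose_monom')
  finally show ?thesis .
qed

lemma dd_sum: "finite A \<Longrightarrow> dd (\<Sum>k\<in>A. G k) t n = (\<Sum>k\<in>A. dd (G k) t n)"
  by (simp add: dd_def coeff_sum fps_sum_nth sum_distrib_left)

lemma dd_smult_const: "dd (smult (fps_const c) G) t n = c * dd G t n"
  by (simp add: dd_def)

lemma dd_poly_opD:
  assumes "\<forall>s>M. dd g s n = 0"
  shows "dd (poly_opD Q g) t n = EE M (pcompose Q [:of_nat n, 1:]) (\<lambda>s. dd g s n) t"
  unfolding poly_opD_def pcompose_as_sum
  by (simp add: dd_sum dd_smult_const dd_opD_pow[OF assms] EE_sum EE_smult)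


lemma pderiv_pow_pCons0:
  "(pderiv ^^ Suc r) (pCons 0 Q) = pCons 0 ((pderiv ^^ Suc r) Q) + smult (of_nat (Suc r)) ((pderiv ^^ r) Q)"
proof (induct r)
  case 0 then show ?case by (simp add: pderiv_pCons add.commute)
next
  case (Suc r)
  have "(pderiv ^^ Suc (Suc r)) (pCons 0 Q) = pderiv ((pderiv ^^ Suc r) (pCons 0 Q))" by simp
  also have "\<dots> = pCons 0 ((pderiv ^^ Suc (Suc r)) Q) + smult (of_nat (Suc (Suc r))) ((pderiv ^^ Suc r) Q)"
    unfolding Suc by (simp add: pderiv_add pderiv_smult pderiv_pCons smult_add_left algebra_simps)
  finally show ?case .
qed

lemma pderiv_pow_pCons:
  "(pderiv ^^ Suc r) (pCons c Q) = (pderiv ^^ Suc r) (pCons 0 Q)"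
  by (simp only: funpow_Suc_right o_apply pderiv_pCons)


lemma taylor_coeff:
  fixes x :: complex
  shows "fact r * coeff (pcompose Q [:x, 1:]) r = poly ((pderiv ^^ r) Q) x"
proof (induct Q arbitrary: r)
  case 0
  show ?case by (induct r) (simp_all add: pderiv_0)
next
  case (pCons c Q)
  show ?case
  proof (cases r)
    case 0
    then show ?thesis using pCons(2)[of 0] by (simp add: pcompose_pCons)
  next
    case (Suc r')
    have e1: "coeff (pcompose (pCons c Q) [:x, 1:]) (Suc r') = x * coeff (pcompose Q [:x, 1:]) (Suc r')
         + coeff (pcompose Q [:x, 1:]) r'"
      by (simp add: pcompose_pCons)
    have "fact r * coeff (pcompose (pCons c Q) [:x, 1:]) r
       = x * (fact (Suc r') * coeff (pcompose Q [:x, 1:]) (Suc r'))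
         + of_nat (Suc r') * (fact r' * coeff (pcompose Q [:x, 1:]) r')"
      unfolding Suc e1 fact_Suc by (simp add: algebra_simps)
    also have "\<dots> = poly ((pderiv ^^ r) (pCons c Q)) x"
      unfolding pCons(2)[of r'] pCons(2)[of "Suc r'"] Suc
      by (subst pderiv_pow_pCons, subst pderiv_pow_pCons0) (simp add: algebra_simps)
    finally show ?thesis .
  qed
qed


lemma dd_smult_Xpow: "dd (smult (fps_X ^ i) G) t n = (if n < i then 0 else dd G t (n - i))"
  by (simp add: dd_def fps_X_power_mult_nth)

lemma taylor_coeff': "coeff (pcompose Q [:x, 1:]) r = poly ((pderiv ^^ r) Q) x / fact r"
  for x :: complex
  using taylor_coeff[of r Q x] by (simp add: field_simps)

lemma core1:
  assumes "\<forall>s>N. \<forall>j. dd g s j = 0"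
  shows "dd (apply_P N Ps g) t n = (\<Sum>i\<le>N. if i \<le> n then
     (\<Sum>\<rho>\<le>N. poly ((pderiv ^^ \<rho>) (Ps i)) (of_nat (n - i)) / fact \<rho> * dd g (t + \<rho>) (n - i)) else 0)"
proof -
  have "dd (apply_P N Ps g) t n = (\<Sum>i\<le>N. dd (smult (fps_X ^ i) (poly_opD (Ps i) g)) t n)"
    by (simp add: apply_P_def dd_sum)
  also have "\<dots> = (\<Sum>i\<le>N. if i \<le> n then
     (\<Sum>\<rho>\<le>N. poly ((pderiv ^^ \<rho>) (Ps i)) (of_nat (n - i)) / fact \<rho> * dd g (t + \<rho>) (n - i)) else 0)"
  proof (rule sum.cong[OF refl])
    fix i
    have h: "\<forall>s>N. dd g s (n - i) = 0" using assms by blast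
    show "dd (smult (fps_X ^ i) (poly_opD (Ps i) g)) t n = (if i \<le> n then
     (\<Sum>\<rho>\<le>N. poly ((pderiv ^^ \<rho>) (Ps i)) (of_nat (n - i)) / fact \<rho> * dd g (t + \<rho>) (n - i)) else 0)"
      unfolding dd_smult_Xpow dd_poly_opD[OF h] EE_def taylor_coeff' by simp
  qed
  finally show ?thesis .
qed

lemma dd_I_r: "dd (I_r a r) s j = (if s \<le> r then a (r - s) j else 0)"
proof -
  have "coeff (I_r a r) s = (if s \<le> r then fps_const (1 / fact s) * Icomp a (r - s) else 0)"
    by (simp add: I_r_def coeff_sum coeff_monom)
  then show ?thesis by (simp add: dd_def Icomp_def)
qed



definition SS :: "nat \<Rightarrow> (nat \<Rightarrow> complex poly) \<Rightarrow> (nat \<Rightarrow> nat \<Rightarrow> complex) \<Rightarrow> nat \<Rightarrow> int \<Rightarrow> complex" where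
  "SS N Ps a s m = (\<Sum>k\<le>s. (1 / fact (s - k)) *
          (\<Sum>l\<le>N. aext a k (m + int l) *
              poly ((pderiv ^^ (s - k)) (Ps (N - l))) (of_int (m + int l))))"

lemma I_r_supp: "r \<le> N \<Longrightarrow> \<forall>s>N. \<forall>j. dd (I_r a r) s j = 0"
  by (simp add: dd_I_r)

lemma key_zero:
  assumes "r \<le> N" "r < t"
  shows "dd (apply_P N Ps (I_r a r)) t n = 0"
  using assms unfolding core1[OF I_r_supp[OF assms(1)]] by (auto intro!: sum.neutral simp: dd_I_r)

lemma key:
  assumes "r \<le> N" "t \<le> r"
  shows "dd (apply_P N Ps (I_r a r)) t n = SS N Ps a (r - t) (int n - int N)"
proof -
  define s where "s = r - t"
  define w where "w i \<rho> = poly ((pderiv ^^ \<rho>) (Ps i)) (of_nat (n - i)) / fact \<rho>" for i \<rho>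
  have sN: "s \<le> N" using assms by (simp add: s_def)
  have inner: "(\<Sum>\<rho>\<le>N. w i \<rho> * dd (I_r a r) (t + \<rho>) (n - i)) = (\<Sum>k\<le>s. w i (s - k) * a k (n - i))" for i
  proof -
    have "(\<Sum>\<rho>\<le>N. w i \<rho> * dd (I_r a r) (t + \<rho>) (n - i))
        = (\<Sum>\<rho>\<le>N. if \<rho> \<le> s then w i \<rho> * a (s - \<rho>) (n - i) else 0)"
      using assms by (intro sum.cong refl) (auto simp: dd_I_r s_def)
    also have "\<dots> = (\<Sum>\<rho>\<le>s. w i \<rho> * a (s - \<rho>) (n - i))"
    proof -
      have "{..N} \<inter> {\<rho>. \<rho> \<le> s} = {..s}" using sN by auto
      then show ?thesis by (simp add: sum.If_cases)
    qed
    also have "\<dots> = (\<Sum>k\<le>s. w i (s - k) * a k (n - i))"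
      by (subst sum_rev_atMost) (intro sum.cong refl, simp)
    finally show ?thesis .
  qed
  have "dd (apply_P N Ps (I_r a r)) t n
      = (\<Sum>i\<le>N. if i \<le> n then (\<Sum>k\<le>s. w i (s - k) * a k (n - i)) else 0)"
    unfolding core1[OF I_r_supp[OF assms(1)]] w_def[symmetric] inner ..
  also have "\<dots> = (\<Sum>i\<le>N. \<Sum>k\<le>s. if i \<le> n then w i (s - k) * a k (n - i) else 0)"
    by (intro sum.cong refl) auto
  also have "\<dots> = (\<Sum>k\<le>s. \<Sum>i\<le>N. if i \<le> n then w i (s - k) * a k (n - i) else 0)"
    by (rule sum.swap)
  also have "\<dots> = (\<Sum>k\<le>s. \<Sum>l\<le>N. if N - l \<le> n then w (N - l) (s - k) * a k (n - (N - l)) else 0)"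
    by (rule sum.cong[OF refl], subst (2) sum_rev_atMost, rule sum.cong[OF refl], auto)
  also have "\<dots> = SS N Ps a s (int n - int N)"
    unfolding SS_def
  proof (intro sum.cong refl)
    fix k assume "k \<in> {..s}"
    show "(\<Sum>l\<le>N. if N - l \<le> n then w (N - l) (s - k) * a k (n - (N - l)) else 0) =
      1 / fact (s - k) * (\<Sum>l\<le>N. aext a k (int n - int N + int l) *
           poly ((pderiv ^^ (s - k)) (Ps (N - l))) (of_int (int n - int N + int l)))"
      unfolding sum_distrib_left
    proof (intro sum.cong refl)
      fix l assume l: "l \<in> {..N}"
      show "(if N - l \<le> n then w (N - l) (s - k) * a k (n - (N - l)) else 0) =
        1 / fact (s - k) * (aext a k (int n - int N + int l) *
           poly ((pderiv ^^ (s - k)) (Ps (N - l))) (of_int (int n - int N + int l)))"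
      proof (cases "N - l \<le> n")
        case True
        have e: "int n - int N + int l = int (n - (N - l))" using True l by auto
        have e2: "nat (int n - int (N - l)) = n - (N - l)" using True by auto
        show ?thesis using True unfolding e by (simp add: w_def aext_def e2)
      next
        case False
        then show ?thesis using l by (simp add: aext_def)
      qed
    qed
  qed
  finally show ?thesis by (simp add: s_def)
qed

lemma dd_zero_iff: "g = 0 \<longleftrightarrow> (\<forall>t n. dd g t n = 0)"
  by (auto simp: dd_def poly_eq_iff fps_eq_iff)

theorem corollary4p4:
  fixes N :: nat and Ps :: "nat \<Rightarrow> complex poly" and a :: "nat \<Rightarrow> nat \<Rightarrow> complex"
  shows "perturbed_solution N Ps a \<longleftrightarrow>
    (\<forall>s\<le>N. \<forall>m::int.
       (\<Sum>k\<le>s. (1 / fact (s - k)) *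
          (\<Sum>l\<le>N. aext a k (m + int l) *
              poly ((pderiv ^^ (s - k)) (Ps (N - l))) (of_int (m + int l)))) = (0::complex))"
  unfolding SS_def[symmetric]
proof
  assume H: "perturbed_solution N Ps a"
  show "\<forall>s\<le>N. \<forall>m. SS N Ps a s m = 0"
  proof (intro allI impI)
    fix s m assume s: "s \<le> N"
    show "SS N Ps a s m = 0"
    proof (cases "m + int N < 0")
      case True
      then show ?thesis by (simp add: SS_def aext_def)
    next
      case False
      define n where "n = nat (m + int N)"
      have m: "m = int n - int N" using False by (simp add: n_def)
      have "apply_P N Ps (I_r a s) = 0" using H s by (simp add: perturbed_solution_def)
      then have "dd (apply_P N Ps (I_r a s)) 0 n = 0" by (simp add: dd_def)
      then show ?thesis using key[OF s, where t=0 and n=n and Ps=Ps and a=a] m by simp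
    qed
  qed
next
  assume H: "\<forall>s\<le>N. \<forall>m. SS N Ps a s m = 0"
  show "perturbed_solution N Ps a"
    unfolding perturbed_solution_def
  proof (intro allI impI)
    fix r assume r: "r \<le> N"
    show "apply_P N Ps (I_r a r) = 0"
      unfolding dd_zero_iff
    proof (intro allI)
      fix t n
      show "dd (apply_P N Ps (I_r a r)) t n = 0"
      proof (cases "t \<le> r")
        case True
        then show ?thesis using key[OF r True] H r by simp
      next
        case False
        then show ?thesis using key_zero[OF r] by simp
      qed
    qed
  qed
qed

end
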